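(* Let $T$ be a positive integer and $\epsilon = T^{-1/3}$. Consider the forecaster that sets $S_0 = 0$ and, for $t = 1,\ldots,T$, predicts $p_t = 1/2 + \epsilon\cdot\mathrm{sgn}(S_{t-1})$, observes $x_t$, and sets $S_t = S_{t-1} + (x_t - p_t)$. If $x_1,\ldots,x_T$ are independent $\mathrm{Bernoulli}(1/2)$ bits, then $\mathbb{E}[\mathsf{CalDist}(x,p)] \le C\,T^{1/3}$ for a universal constant $C$.
   Context: $\mathrm{sgn}(0) = 0$, $\mathrm{sgn}(y)=1$ for $y>0$, $\mathrm{sgn}(y)=-1$ for $y<0$. For $x \in \{0,1\}^T$, let $\mathcal{C}(x) = \{q \in [0,1]^T : \sum_{t=1}^T (x_t - q_t)\mathbf{1}[q_t = \alpha] = 0 \text{ for all } \alpha \in [0,1]\}$ and $\mathsf{CalDist}(x,p) = \min_{q \in \mathcal{C}(x)} \|p-q\|_1$. *)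

theory Defs
  imports Complex_Main "HOL-Library.FuncSet"
begin

definition bits :: "nat \<Rightarrow> (nat \<Rightarrow> real) set" where
  "bits T = ({1..T} \<rightarrow>\<^sub>E {0, 1})"

definition calib_set :: "nat \<Rightarrow> (nat \<Rightarrow> real) \<Rightarrow> (nat \<Rightarrow> real) set" where
  "calib_set T x = {q \<in> {1..T} \<rightarrow>\<^sub>E {0..1}.
      \<forall>\<alpha>\<in>{0..1::real}. (\<Sum>t\<in>{1..T}. (x t - q t) * (if q t = \<alpha> then 1 else 0)) = 0}"

text \<open>CalDist(x,p) = min over q in C(x) of the l1 distance (the minimum is attained;
  we write it as the infimum, which coincides with it).\<close>
definition CalDist :: "nat \<Rightarrow> (nat \<Rightarrow> real) \<Rightarrow> (nat \<Rightarrow> real) \<Rightarrow> real" where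
  "CalDist T x p = (INF q\<in>calib_set T x. \<Sum>t\<in>{1..T}. \<bar>p t - q t\<bar>)"

fun S_run :: "real \<Rightarrow> (nat \<Rightarrow> real) \<Rightarrow> nat \<Rightarrow> real" where
  "S_run eps x 0 = 0"
| "S_run eps x (Suc t) = S_run eps x t + (x (Suc t) - (1/2 + eps * sgn (S_run eps x t)))"

definition forecast :: "real \<Rightarrow> (nat \<Rightarrow> real) \<Rightarrow> nat \<Rightarrow> real" where
  "forecast eps x t = 1/2 + eps * sgn (S_run eps x (t - 1))"

end

theory Submission
  imports Defs
begin


definition flip :: "nat \<Rightarrow> (nat \<Rightarrow> real) \<Rightarrow> nat \<Rightarrow> real" where
  "flip j x = x(j := 1 - x j)"

lemma flip_in: "j \<in> {1..T} \<Longrightarrow> x \<in> bits T \<Longrightarrow> flip j x \<in> bits T"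
  by (auto simp: bits_def flip_def PiE_def extensional_def Pi_def)

lemma flip_flip: "flip j (flip j x) = x"
  by (auto simp: flip_def)

lemma bits_val: "x \<in> bits T \<Longrightarrow> t \<in> {1..T} \<Longrightarrow> x t = 0 \<or> x t = 1"
  by (auto simp: bits_def PiE_def Pi_def)

lemma finite_bits: "finite (bits T)"
  by (simp add: bits_def finite_PiE)

lemma card_bits: "card (bits T) = 2 ^ T"
  unfolding bits_def by (subst card_PiE) (auto simp: numeral_2_eq_2)

lemma sum_flip_half:
  assumes j: "j \<in> {1..T}" and inv: "\<And>x. x \<in> bits T \<Longrightarrow> \<phi> (flip j x) = \<phi> x"
  shows "(\<Sum>x\<in>bits T. x j * \<phi> x) = (\<Sum>x\<in>bits T. \<phi> x) / 2"
proof -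
  have "(\<Sum>x\<in>bits T. x j * \<phi> x) = (\<Sum>x\<in>bits T. (flip j x) j * \<phi> (flip j x))"
    by (rule sum.reindex_bij_witness[where i="flip j" and j="flip j"])
       (auto simp: flip_flip flip_in[OF j])
  also have "\<dots> = (\<Sum>x\<in>bits T. (1 - x j) * \<phi> x)"
    by (rule sum.cong) (simp_all add: inv, simp add: flip_def)
  also have "\<dots> = (\<Sum>x\<in>bits T. \<phi> x) - (\<Sum>x\<in>bits T. x j * \<phi> x)"
    by (simp add: algebra_simps sum_subtractf)
  finally show ?thesis by simp
qed

lemma sum_bit:
  fixes F :: "(nat \<Rightarrow> real) \<Rightarrow> real \<Rightarrow> real"
  assumes j: "j \<in> {1..T}" and inv: "\<And>x v. x \<in> bits T \<Longrightarrow> F (flip j x) v = F x v"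
  shows "(\<Sum>x\<in>bits T. F x (x j)) = (\<Sum>x\<in>bits T. (F x 0 + F x 1) / 2)"
proof -
  have "(\<Sum>x\<in>bits T. F x (x j)) = (\<Sum>x\<in>bits T. F x 0 + x j * (F x 1 - F x 0))"
  proof (rule sum.cong)
    fix x assume "x \<in> bits T"
    then have "x j = 0 \<or> x j = 1" using bits_val j by blast
    then show "F x (x j) = F x 0 + x j * (F x 1 - F x 0)" by auto
  qed simp
  also have "\<dots> = (\<Sum>x\<in>bits T. F x 0) + (\<Sum>x\<in>bits T. x j * (F x 1 - F x 0))"
    by (simp add: sum.distrib)
  also have "(\<Sum>x\<in>bits T. x j * (F x 1 - F x 0)) = (\<Sum>x\<in>bits T. F x 1 - F x 0) / 2"
    by (rule sum_flip_half[OF j]) (simp add: inv)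
  finally show ?thesis
    by (simp add: sum_subtractf sum.distrib sum_divide_distrib[symmetric] field_simps)
qed

lemma S_run_flip: "t < j \<Longrightarrow> S_run e (flip j x) t = S_run e x t"
  by (induction t) (auto simp: flip_def)

lemma S_run_sum: "S_run e x n = (\<Sum>t\<in>{1..n}. x t - forecast e x t)"
  by (induction n) (auto simp: forecast_def)



definition ch :: "real \<Rightarrow> real" where "ch y = (exp y + exp (- y)) / 2"
definition sh :: "real \<Rightarrow> real" where "sh y = (exp y - exp (- y)) / 2"

lemma ch_even: "ch (- y) = ch y" by (simp add: ch_def)

lemma ch_sum: "ch (u + v) + ch (u - v) = 2 * ch u * ch v"
  by (simp add: ch_def exp_add exp_diff exp_minus field_simps)

lemma ch_diff: "ch (y - d) = ch y * ch d - sh y * sh d"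
  by (simp add: ch_def sh_def exp_diff exp_minus field_simps)

lemma ch_ge1: "1 \<le> ch y"
  using exp_ge_add_one_self[of y] exp_ge_add_one_self[of "-y"] unfolding ch_def by argo

lemma abs_le_ch: "\<bar>y\<bar> \<le> 2 * ch y"
proof -
  have "exp y > 0" "exp (-y) > 0" by simp_all
  then have "y \<le> exp y + exp (-y)" "- y \<le> exp y + exp (-y)"
    using exp_ge_add_one_self[of y] exp_ge_add_one_self[of "-y"] by argo+
  then show ?thesis unfolding ch_def abs_le_iff by argo
qed

lemma exp_neg_le: fixes z :: real assumes "0 \<le> z" shows "exp (- z) \<le> 1 - z + z\<^sup>2"
proof -
  have "1 + z \<le> exp z" using exp_ge_add_one_self[of z] by argo
  then have "exp (-z) \<le> 1 / (1 + z)" using assms by (simp add: exp_minus field_simps)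
  also have "\<dots> \<le> 1 - z + z\<^sup>2"
  proof -
    have "1 \<le> (1 + z) * (1 - z + z\<^sup>2)" using assms by (simp add: algebra_simps power2_eq_square power3_eq_cube[symmetric])
    then show ?thesis using assms by (simp add: field_simps)
  qed
  finally show ?thesis .
qed

lemma ch_small_nonneg: assumes "0 \<le> z" "z \<le> 1" shows "ch z \<le> 1 + z\<^sup>2"
  using exp_bound[OF assms] exp_neg_le[OF assms(1)] by (simp add: ch_def)

lemma ch_small: assumes "\<bar>z\<bar> \<le> 1" shows "ch z \<le> 1 + z\<^sup>2"
proof (cases "z \<ge> 0")
  case True then show ?thesis using ch_small_nonneg assms by auto
next
  case False then show ?thesis using ch_small_nonneg[of "-z"] assms ch_even[of z] by auto
qed

lemma sh_lower: assumes "0 \<le> d" shows "d - d\<^sup>2 / 2 \<le> sh d"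
  using exp_ge_add_one_self[of d] exp_neg_le[OF assms] unfolding sh_def by argo

lemma sh_nonneg: assumes "0 \<le> d" shows "0 \<le> sh d"
  using assms by (simp add: sh_def)

lemma sh_big: assumes "2 \<le> y" shows "(4/5) * ch y \<le> sh y"
proof -
  have "exp 2 \<ge> (3::real)" using exp_ge_add_one_self[of 2] by argo
  then have "exp 2 * exp 2 \<ge> (9::real)" using mult_mono[of "3::real" "exp 2" 3 "exp 2"] by simp
  moreover have "exp (4::real) = exp 2 * exp 2" using exp_add[of "2::real" 2] by simp
  ultimately have "exp (4::real) \<ge> 9" by simp
  moreover have "exp (2*y) \<ge> exp 4" using assms by simp
  ultimately have "exp (2*y) \<ge> 9" by linarith
  moreover have "exp (2*y) = exp y * exp y" unfolding mult_2 by (rule exp_add)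
  ultimately have e9: "exp y * exp y \<ge> 9" by simp
  have "9 * exp (-y) \<le> exp y * exp y * exp (-y)" using e9 by (intro mult_right_mono) auto
  also have "exp y * exp y * exp (-y) = exp y" by (simp add: exp_minus)
  finally have "9 * exp (-y) \<le> exp y" .
  then show ?thesis unfolding ch_def sh_def by argo
qed

lemma ch_le9: assumes "0 \<le> y" "y \<le> 2" shows "ch y \<le> 9"
proof -
  have "exp y \<le> exp 2" using assms by simp
  also have "exp (2::real) = exp 1 * exp 1" by (simp add: exp_add[symmetric])
  also have "\<dots> \<le> 3 * 3" using exp_le by (intro mult_mono) auto
  finally have "exp y \<le> 9" by simp
  moreover have "exp (-y) \<le> 1" using assms by simp
  ultimately show ?thesis unfolding ch_def by argo
qed



lemma ch_shift: fixes e s :: real shows "ch (e * (s - e * sgn s)) \<le> ch (e * abs s - e^2)"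
proof (cases "s = 0")
  case True
  then have h: "e * (s - e * sgn s) = 0" by simp
  have "ch (e * (s - e * sgn s)) = 1" unfolding h by (simp add: ch_def)
  then show ?thesis using ch_ge1[of "e * abs s - e^2"] by linarith
next
  case False
  show ?thesis
  proof (cases "s > 0")
    case True
    then have "e * (s - e * sgn s) = e * abs s - e^2" by (simp add: power2_eq_square right_diff_distrib)
    then show ?thesis by simp
  next
    case F: False
    with False have "s < 0" by simp
    then have "e * (s - e * sgn s) = - (e * abs s - e^2)" by (simp add: power2_eq_square algebra_simps)
    then show ?thesis using ch_even[of "e * abs s - e^2"] by simp
  qed
qed

lemma ch_step:
  fixes e s :: real
  assumes e0: "0 < e" and e1: "e \<le> 1/4"
  shows "(ch (e * (s + 1 - (1/2 + e * sgn s))) + ch (e * (s - (1/2 + e * sgn s)))) / 2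
         \<le> (1 - e^2/4) * ch (e*s) + 8 * e^2"
proof -
  define w where "w = s - e * sgn s"
  define y where "y = e * \<bar>s\<bar>"
  define d where "d = e^2"
  have y0: "0 \<le> y" using e0 by (simp add: y_def)
  have d0: "0 \<le> d" and d1: "d \<le> 1/16" unfolding d_def using e0 e1 power_mono[of e "1/4" 2]
    by (auto simp: power2_eq_square)
  have chy: "ch (e*s) = ch y"
    by (cases "s \<ge> 0") (auto simp: y_def ch_even[of "e*s", symmetric])
  have "ch (e * (s + 1 - (1/2 + e * sgn s))) + ch (e * (s - (1/2 + e * sgn s)))
        = ch (e*w + e/2) + ch (e*w - e/2)"
    by (simp add: w_def algebra_simps)
  also have "\<dots> = 2 * ch (e*w) * ch (e/2)" by (rule ch_sum)
  finally have L: "(ch (e * (s + 1 - (1/2 + e * sgn s))) + ch (e * (s - (1/2 + e * sgn s)))) / 2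
       = ch (e*w) * ch (e/2)" by simp
  have c1: "ch (e/2) \<le> 1 + d/4"
    using ch_small[of "e/2"] e0 e1 by (simp add: d_def power_divide)
  have c2: "ch (e*w) \<le> ch (y - d)" using ch_shift[of e s] by (simp add: w_def y_def d_def)
  have chd: "ch d \<le> 1 + d/16"
  proof -
    have "ch d \<le> 1 + d^2" using ch_small[of d] d0 d1 by simp
    also have "d^2 \<le> d/16" using d0 d1 mult_left_mono[of d "1/16" d] by (simp add: power2_eq_square)
    finally show ?thesis by simp
  qed
  have chy0: "0 \<le> ch y" using ch_ge1[of y] by simp
  have main: "ch (e*w) * ch (e/2) \<le> (1 - d/4) * ch y + 8 * d"
  proof (cases "y \<ge> 2")
    case True
    have shy: "(4/5) * ch y \<le> sh y" by (rule sh_big[OF True])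
    have shd: "d - d^2/2 \<le> sh d" by (rule sh_lower[OF d0])
    have dd: "0 \<le> d - d^2/2" using d0 d1 mult_left_mono[of d "1/16" d] by (simp add: power2_eq_square)
    have "(4/5) * ch y * (d - d^2/2) \<le> sh y * sh d"
      using shy shd dd chy0 by (intro mult_mono) auto
    then have "ch (y - d) \<le> ch y * (1 + d/16) - (4/5) * ch y * (d - d^2/2)"
      using ch_diff[of y d] chd chy0 mult_left_mono[OF chd chy0] by argo
    also have "\<dots> = ch y * (1 + d/16 - (4/5) * (d - d^2/2))" by (simp add: field_simps)
    also have "\<dots> \<le> ch y * (1 - 7/10 * d)"
    proof -
      have "d^2 \<le> d/16" using d0 d1 mult_left_mono[of d "1/16" d] by (simp add: power2_eq_square)
      moreover have "(4/5) * (d - d^2/2) = 4/5*d - 2/5*d^2" by (simp add: algebra_simps)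
      ultimately have "1 + d/16 - (4/5) * (d - d^2/2) \<le> 1 - 7/10 * d" using d0 by linarith
      then show ?thesis using chy0 by (rule mult_left_mono)
    qed
    finally have A: "ch (e*w) \<le> ch y * (1 - 7/10 * d)" using c2 by simp
    have pos: "0 \<le> ch y * (1 - 7/10 * d)" using chy0 d1 by simp
    have "ch (e*w) * ch (e/2) \<le> (ch y * (1 - 7/10 * d)) * (1 + d/4)"
      using A c1 pos ch_ge1[of "e*w"] ch_ge1[of "e/2"] by (intro mult_mono) auto
    also have "\<dots> = ch y * ((1 - 7/10 * d) * (1 + d/4))" by simp
    also have "\<dots> \<le> ch y * (1 - d/4)"
    proof -
      have "(1 - 7/10 * d) * (1 + d/4) \<le> 1 - d/4" using d0 by (simp add: algebra_simps power2_eq_square)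
      then show ?thesis using chy0 by (rule mult_left_mono)
    qed
    finally show ?thesis using d0 by (simp add: mult.commute)
  next
    case False
    have "ch (y - d) \<le> ch y * ch d"
      using ch_diff[of y d] sh_nonneg[OF y0] sh_nonneg[OF d0] by (simp add: mult_nonneg_nonneg)
    also have "\<dots> \<le> ch y * (1 + d/16)" using chd chy0 by (rule mult_left_mono)
    finally have A: "ch (e*w) \<le> ch y * (1 + d/16)" using c2 by simp
    have "ch (e*w) * ch (e/2) \<le> (ch y * (1 + d/16)) * (1 + d/4)"
      using A c1 chy0 d0 ch_ge1[of "e*w"] ch_ge1[of "e/2"] by (intro mult_mono) auto
    also have "\<dots> = ch y * ((1 + d/16) * (1 + d/4))" by simp
    also have "\<dots> \<le> ch y * (1 + d/2)"
    proof -
      have "d * d \<le> d" using d0 d1 mult_left_mono[of d "1/16" d] by simp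
      moreover have "(1 + d/16) * (1 + d/4) = 1 + 5/16*d + d*d/64" by (simp add: field_simps)
      ultimately have "(1 + d/16) * (1 + d/4) \<le> 1 + d/2" using d0 by linarith
      then show ?thesis using chy0 by (rule mult_left_mono)
    qed
    also have "\<dots> = (1 - d/4) * ch y + (3/4) * d * ch y" by (simp add: algebra_simps)
    also have "\<dots> \<le> (1 - d/4) * ch y + (3/4) * d * 9"
      using ch_le9[OF y0] False d0 by (intro add_left_mono mult_left_mono) auto
    finally show ?thesis using d0 by simp
  qed
  show ?thesis using L main chy by (simp add: d_def)
qed



lemma step_sum:
  fixes g :: "real \<Rightarrow> real"
  assumes "t < T"
  shows "(\<Sum>x\<in>bits T. g (S_run e x (Suc t))) =
    (\<Sum>x\<in>bits T. (g (S_run e x t + 1 - (1/2 + e * sgn (S_run e x t)))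
                 + g (S_run e x t - (1/2 + e * sgn (S_run e x t)))) / 2)"
proof -
  define F where "F x v = g (S_run e x t + v - (1/2 + e * sgn (S_run e x t)))" for x v
  have j: "Suc t \<in> {1..T}" using assms by simp
  have "(\<Sum>x\<in>bits T. g (S_run e x (Suc t))) = (\<Sum>x\<in>bits T. F x (x (Suc t)))"
    by (simp add: F_def algebra_simps)
  also have "\<dots> = (\<Sum>x\<in>bits T. (F x 0 + F x 1) / 2)"
    by (rule sum_bit[OF j]) (simp add: F_def S_run_flip)
  finally show ?thesis by (simp add: F_def add.commute)
qed

lemma ch_sum_bound:
  assumes e0: "0 < e" and e1: "e \<le> 1/4"
  shows "t \<le> T \<Longrightarrow> (\<Sum>x\<in>bits T. ch (e * S_run e x t)) \<le> 32 * 2^T"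
proof (induction t)
  case 0
  have "(\<Sum>x\<in>bits T. ch (e * S_run e x 0)) = 2^T" by (simp add: ch_def card_bits)
  then show ?case by simp
next
  case (Suc t)
  then have IH: "(\<Sum>x\<in>bits T. ch (e * S_run e x t)) \<le> 32 * 2^T" by simp
  have "(\<Sum>x\<in>bits T. ch (e * S_run e x (Suc t))) =
    (\<Sum>x\<in>bits T. (ch (e * (S_run e x t + 1 - (1/2 + e * sgn (S_run e x t))))
                 + ch (e * (S_run e x t - (1/2 + e * sgn (S_run e x t))))) / 2)"
    using step_sum[of t T "\<lambda>z. ch (e * z)" e] Suc.prems by simp
  also have "\<dots> \<le> (\<Sum>x\<in>bits T. (1 - e^2/4) * ch (e * S_run e x t) + 8 * e^2)"
    by (rule sum_mono) (rule ch_step[OF e0 e1])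
  also have "\<dots> = (1 - e^2/4) * (\<Sum>x\<in>bits T. ch (e * S_run e x t)) + 8 * e^2 * 2^T"
    by (simp add: sum.distrib sum_distrib_left card_bits)
  also have "\<dots> \<le> (1 - e^2/4) * (32 * 2^T) + 8 * e^2 * 2^T"
  proof -
    have "e^2 \<le> 1" using e0 e1 power_mono[of e 1 2] by simp
    then show ?thesis using IH by (intro add_right_mono mult_left_mono) auto
  qed
  also have "\<dots> = 32 * 2^T" by (simp add: algebra_simps)
  finally show ?case .
qed

lemma abs_step:
  fixes s e :: real assumes "0 \<le> e"
  shows "\<bar>s\<bar> - e + (if s = 0 then 1/2 else 0)
     \<le> (\<bar>s + 1 - (1/2 + e * sgn s)\<bar> + \<bar>s - (1/2 + e * sgn s)\<bar>) / 2"
  using assms by (cases "s > 0"; cases "s < 0") (auto simp: abs_if)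

lemma abs_sum_bound:
  assumes e0: "0 \<le> e"
  shows "t \<le> T \<Longrightarrow> - e * t * 2^T + (1/2) * (\<Sum>x\<in>bits T. \<Sum>i<t. if S_run e x i = 0 then 1 else 0)
          \<le> (\<Sum>x\<in>bits T. \<bar>S_run e x t\<bar>)"
proof (induction t)
  case 0
  then show ?case by simp
next
  case (Suc t)
  then have IH: "- e * t * 2^T + (1/2) * (\<Sum>x\<in>bits T. \<Sum>i<t. if S_run e x i = 0 then 1 else 0)
          \<le> (\<Sum>x\<in>bits T. \<bar>S_run e x t\<bar>)" by simp
  have "(\<Sum>x\<in>bits T. \<bar>S_run e x (Suc t)\<bar>) =
    (\<Sum>x\<in>bits T. (\<bar>S_run e x t + 1 - (1/2 + e * sgn (S_run e x t))\<bar>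
                 + \<bar>S_run e x t - (1/2 + e * sgn (S_run e x t))\<bar>) / 2)"
    using step_sum[of t T "\<lambda>z. \<bar>z\<bar>" e] Suc.prems by simp
  also have "\<dots> \<ge> (\<Sum>x\<in>bits T. \<bar>S_run e x t\<bar> - e + (if S_run e x t = 0 then 1/2 else 0))"
    by (rule sum_mono) (rule abs_step[OF e0])
  finally have A: "(\<Sum>x\<in>bits T. \<bar>S_run e x t\<bar> - e + (if S_run e x t = 0 then 1/2 else 0))
      \<le> (\<Sum>x\<in>bits T. \<bar>S_run e x (Suc t)\<bar>)" .
  have B: "(\<Sum>x\<in>bits T. \<bar>S_run e x t\<bar> - e + (if S_run e x t = 0 then 1/2 else 0))
     = (\<Sum>x\<in>bits T. \<bar>S_run e x t\<bar>) - e * 2^T + (1/2) * (\<Sum>x\<in>bits T. if S_run e x t = 0 then 1 else 0)"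
  proof -
    have "(\<Sum>x\<in>bits T. \<bar>S_run e x t\<bar> - e + (if S_run e x t = 0 then 1/2 else 0))
      = (\<Sum>x\<in>bits T. (\<bar>S_run e x t\<bar> + (1/2) * (if S_run e x t = 0 then 1 else 0)) - e)"
      by (rule sum.cong) auto
    also have "\<dots> = (\<Sum>x\<in>bits T. \<bar>S_run e x t\<bar>) + (1/2) * (\<Sum>x\<in>bits T. if S_run e x t = 0 then 1 else 0) - e * 2^T"
      by (simp only: sum_subtractf sum.distrib sum_distrib_left[symmetric]) (simp add: card_bits)
    finally show ?thesis by simp
  qed
  have C: "(\<Sum>x\<in>bits T. \<Sum>i<Suc t. if S_run e x i = 0 then 1 else (0::real))
     = (\<Sum>x\<in>bits T. \<Sum>i<t. if S_run e x i = 0 then 1 else 0) + (\<Sum>x\<in>bits T. if S_run e x t = 0 then 1 else 0)"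
    by (simp add: sum.distrib)
  show ?case using IH A B C by (simp add: algebra_simps)
qed

definition Mk :: "real \<Rightarrow> (nat \<Rightarrow> real) \<Rightarrow> nat \<Rightarrow> real" where
  "Mk e x k = (\<Sum>i<k. if S_run e x i \<ge> 0 then x (Suc i) - 1/2 else 0)"

lemma Mk_flip: "k < j \<Longrightarrow> Mk e (flip j x) k = Mk e x k"
  unfolding Mk_def by (rule sum.cong) (auto simp: S_run_flip, auto simp: flip_def)

lemma Mk_sq_bound:
  shows "k \<le> T \<Longrightarrow> (\<Sum>x\<in>bits T. (Mk e x k)^2) \<le> k / 4 * 2^T"
proof (induction k)
  case 0
  then show ?case by (simp add: Mk_def)
next
  case (Suc k)
  then have IH: "(\<Sum>x\<in>bits T. (Mk e x k)^2) \<le> k / 4 * 2^T" by simp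
  define F where "F x v = (Mk e x k + (if S_run e x k \<ge> 0 then v - 1/2 else 0))^2" for x v
  have j: "Suc k \<in> {1..T}" using Suc.prems by simp
  have "(\<Sum>x\<in>bits T. (Mk e x (Suc k))^2) = (\<Sum>x\<in>bits T. F x (x (Suc k)))"
    by (simp add: F_def Mk_def)
  also have "\<dots> = (\<Sum>x\<in>bits T. (F x 0 + F x 1) / 2)"
    by (rule sum_bit[OF j]) (simp add: F_def S_run_flip Mk_flip)
  also have "\<dots> \<le> (\<Sum>x\<in>bits T. (Mk e x k)^2 + 1/4)"
    by (rule sum_mono) (auto simp: F_def power2_eq_square algebra_simps)
  also have "\<dots> = (\<Sum>x\<in>bits T. (Mk e x k)^2) + 2^T / 4"
    by (simp add: sum.distrib card_bits)
  also have "\<dots> \<le> Suc k / 4 * 2^T" using IH by (simp add: algebra_simps)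
  finally show ?case .
qed



lemma move:
  fixes x :: "nat \<Rightarrow> real"
  assumes "finite A" "\<forall>t\<in>A. x t = 0 \<or> x t = 1" "1/4 \<le> a" "a \<le> 3/4"
  shows "\<exists>A'\<subseteq>A. \<bar>\<Sum>t\<in>A'. x t - a\<bar> \<le> 1 \<and> real (card (A - A')) \<le> 4 * \<bar>\<Sum>t\<in>A. x t - a\<bar>"
  using assms
proof (induction "card A" arbitrary: A rule: less_induct)
  case less
  show ?case
  proof (cases "\<bar>\<Sum>t\<in>A. x t - a\<bar> \<le> 1")
    case True then show ?thesis by (intro exI[of _ A]) auto
  next
    case False
    show ?thesis
    proof (cases "(\<Sum>t\<in>A. x t - a) > 1")
      case pos: True
      have "\<exists>t\<in>A. x t = 1"
      proof (rule ccontr)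
        assume "\<not> ?thesis"
        then have "\<forall>t\<in>A. x t = 0" using less.prems by auto
        then have "(\<Sum>t\<in>A. x t - a) = - a * card A" by (simp add: sum_subtractf)
        moreover have "0 \<le> a * card A" using less.prems by simp
        ultimately show False using pos by linarith
      qed
      then obtain t where t: "t \<in> A" "x t = 1" by blast
      let ?A1 = "A - {t}"
      have c: "card ?A1 < card A" by (rule card_Diff1_less[OF less.prems(1) t(1)])
      have s: "(\<Sum>t\<in>A. x t - a) = (\<Sum>t\<in>?A1. x t - a) + (1 - a)"
        using t less.prems(1) by (simp add: sum.remove)
      obtain A' where A': "A' \<subseteq> ?A1" "\<bar>\<Sum>t\<in>A'. x t - a\<bar> \<le> 1"
        "real (card (?A1 - A')) \<le> 4 * \<bar>\<Sum>t\<in>?A1. x t - a\<bar>"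
        using less.hyps[OF c] less.prems by auto
      have "A - A' = insert t (?A1 - A')" using A' t by auto
      then have "card (A - A') = Suc (card (?A1 - A'))" using less.prems(1) by simp
      then show ?thesis using A' s pos less.prems by (intro exI[of _ A']) auto
    next
      case neg: False
      with False have neg: "(\<Sum>t\<in>A. x t - a) < -1" by simp
      have "\<exists>t\<in>A. x t = 0"
      proof (rule ccontr)
        assume "\<not> ?thesis"
        then have "\<forall>t\<in>A. x t = 1" using less.prems by auto
        then have "(\<Sum>t\<in>A. x t - a) = (1 - a) * card A" by (simp add: sum_subtractf)
        moreover have "0 \<le> (1 - a) * card A" using less.prems by simp
        ultimately show False using neg by linarith
      qed
      then obtain t where t: "t \<in> A" "x t = 0" by blast
      let ?A1 = "A - {t}"
      have c: "card ?A1 < card A" by (rule card_Diff1_less[OF less.prems(1) t(1)])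
      have s: "(\<Sum>t\<in>A. x t - a) = (\<Sum>t\<in>?A1. x t - a) - a"
        using t less.prems(1) by (simp add: sum.remove)
      obtain A' where A': "A' \<subseteq> ?A1" "\<bar>\<Sum>t\<in>A'. x t - a\<bar> \<le> 1"
        "real (card (?A1 - A')) \<le> 4 * \<bar>\<Sum>t\<in>?A1. x t - a\<bar>"
        using less.hyps[OF c] less.prems by auto
      have "A - A' = insert t (?A1 - A')" using A' t by auto
      then have "card (A - A') = Suc (card (?A1 - A'))" using less.prems(1) by simp
      then show ?thesis using A' s neg less.prems by (intro exI[of _ A']) auto
    qed
  qed
qed



definition mean :: "(nat \<Rightarrow> real) \<Rightarrow> nat set \<Rightarrow> real" where
  "mean x G = (\<Sum>t\<in>G. x t) / card G"

lemma mean_range: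
  assumes "finite G" "\<forall>t\<in>G. x t = 0 \<or> x t = 1"
  shows "0 \<le> mean x G \<and> mean x G \<le> 1"
proof -
  have "0 \<le> (\<Sum>t\<in>G. x t)" using assms by (intro sum_nonneg) auto
  moreover have "(\<Sum>t\<in>G. x t) \<le> (\<Sum>t\<in>G. 1)" using assms by (intro sum_mono) auto
  ultimately show ?thesis unfolding mean_def
    by (cases "card G = 0") (auto simp: field_simps)
qed

lemma mean_mult: assumes "finite G" shows "card G * mean x G = (\<Sum>t\<in>G. x t)"
  using assms by (cases "card G = 0") (auto simp: mean_def)

lemma part_cost:
  assumes "finite G"
  shows "(\<Sum>t\<in>G. \<bar>p t - mean x G\<bar>) \<le> (\<Sum>t\<in>G. \<bar>p t - a\<bar>) + \<bar>\<Sum>t\<in>G. x t - a\<bar>"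
proof -
  have "(\<Sum>t\<in>G. \<bar>p t - mean x G\<bar>) \<le> (\<Sum>t\<in>G. \<bar>p t - a\<bar> + \<bar>a - mean x G\<bar>)"
    by (rule sum_mono) linarith
  also have "\<dots> = (\<Sum>t\<in>G. \<bar>p t - a\<bar>) + card G * \<bar>a - mean x G\<bar>" by (simp add: sum.distrib)
  also have "card G * \<bar>a - mean x G\<bar> = \<bar>card G * a - card G * mean x G\<bar>"
    by (simp add: abs_mult right_diff_distrib[symmetric])
  also have "\<dots> = \<bar>\<Sum>t\<in>G. x t - a\<bar>"
    using mean_mult[OF assms, of x] by (simp add: sum_subtractf abs_minus_commute)
  finally show ?thesis .
qed

lemma cal_bound:
  fixes x p :: "nat \<Rightarrow> real" and a b :: real
  assumes x: "x \<in> bits T" and A: "A \<subseteq> {1..T}"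
  shows "CalDist T x p \<le> (\<Sum>t\<in>A. \<bar>p t - a\<bar>) + (\<Sum>t\<in>{1..T}-A. \<bar>p t - b\<bar>)
      + \<bar>\<Sum>t\<in>A. x t - a\<bar> + \<bar>\<Sum>t\<in>{1..T}-A. x t - b\<bar>"
proof -
  define B where "B = {1..T} - A"
  have fA: "finite A" using A finite_subset by blast
  have fB: "finite B" by (simp add: B_def)
  have xv: "\<forall>t\<in>{1..T}. x t = 0 \<or> x t = 1" using bits_val[OF x] by blast
  define mA where "mA = mean x A"
  define mB where "mB = mean x B"
  have mA: "0 \<le> mA \<and> mA \<le> 1" unfolding mA_def using mean_range[OF fA] xv A by blast
  have mB: "0 \<le> mB \<and> mB \<le> 1" unfolding mB_def using mean_range[OF fB] xv by (auto simp: B_def)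
  define q where "q t = (if t \<in> {1..T} then (if t \<in> A then mA else mB) else undefined)" for t
  have split: "(\<Sum>t\<in>{1..T}. f t) = (\<Sum>t\<in>A. f t) + (\<Sum>t\<in>B. f t)" for f :: "nat \<Rightarrow> real"
  proof -
    have "{1..T} = A \<union> B" "A \<inter> B = {}" using A by (auto simp: B_def)
    then show ?thesis using fA fB by (simp add: sum.union_disjoint)
  qed
  have qA: "t \<in> A \<Longrightarrow> q t = mA" for t using A by (auto simp: q_def)
  have qB: "t \<in> B \<Longrightarrow> q t = mB" for t by (auto simp: q_def B_def)
  have qin: "q \<in> calib_set T x"
    unfolding calib_set_def
  proof (intro CollectI conjI ballI)
    show "q \<in> {1..T} \<rightarrow>\<^sub>E {0..1}" using mA mB by (auto simp: q_def PiE_def extensional_def Pi_def)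
  next
    fix \<alpha> :: real
    have "(\<Sum>t\<in>{1..T}. (x t - q t) * (if q t = \<alpha> then 1 else 0))
       = (\<Sum>t\<in>A. (x t - mA) * (if mA = \<alpha> then 1 else 0)) + (\<Sum>t\<in>B. (x t - mB) * (if mB = \<alpha> then 1 else 0))"
      unfolding split using qA qB by simp
    also have "\<dots> = (if mA = \<alpha> then 1 else 0) * ((\<Sum>t\<in>A. x t) - card A * mA)
                  + (if mB = \<alpha> then 1 else 0) * ((\<Sum>t\<in>B. x t) - card B * mB)"
      by (simp add: sum_distrib_right[symmetric] sum_subtractf)
    also have "\<dots> = 0" using mean_mult[OF fA, of x] mean_mult[OF fB, of x] by (simp add: mA_def mB_def)
    finally show "(\<Sum>t\<in>{1..T}. (x t - q t) * (if q t = \<alpha> then 1 else 0)) = 0" .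
  qed
  have "CalDist T x p \<le> (\<Sum>t\<in>{1..T}. \<bar>p t - q t\<bar>)"
    unfolding CalDist_def
    by (rule cINF_lower[OF _ qin]) (auto intro: bdd_belowI[of _ 0] simp: sum_nonneg)
  also have "\<dots> = (\<Sum>t\<in>A. \<bar>p t - mA\<bar>) + (\<Sum>t\<in>B. \<bar>p t - mB\<bar>)"
    unfolding split using qA qB by simp
  also have "\<dots> \<le> ((\<Sum>t\<in>A. \<bar>p t - a\<bar>) + \<bar>\<Sum>t\<in>A. x t - a\<bar>) + ((\<Sum>t\<in>B. \<bar>p t - b\<bar>) + \<bar>\<Sum>t\<in>B. x t - b\<bar>)"
    unfolding mA_def mB_def by (intro add_mono part_cost fA fB)
  finally show ?thesis by (simp add: B_def)
qed



lemma shift1: fixes f :: "nat \<Rightarrow> real" shows "(\<Sum>t\<in>{1..T}. f (t - 1)) = (\<Sum>i<T. f i)"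
  using sum.atLeast1_atMost_eq[of "\<lambda>t. f (t - 1)" T] by simp

lemma det:
  assumes x: "x \<in> bits T" and e0: "0 < e" and e1: "e \<le> 1/4"
  shows "CalDist T x (forecast e x) \<le> 2 + \<bar>S_run e x T\<bar>
     + 2 * e * (\<Sum>i<T. if S_run e x i = 0 then 1 else 0) + 16 * e * \<bar>Mk e x T\<bar> + 16 * e^2 * T"
proof -
  define p where "p = forecast e x"
  define S where "S t = S_run e x (t - 1)" for t
  define a where "a = 1/2 + e"
  define b where "b = 1/2 - e"
  define A0 where "A0 = {t\<in>{1..T}. S t \<ge> 0}"
  define B0 where "B0 = {1..T} - A0"
  define Z1 where "Z1 = (\<Sum>t\<in>{1..T}. if S t = 0 then 1 else (0::real))"
  define E0 where "E0 = (\<Sum>t\<in>A0. x t - a)"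
  have pS: "p t = 1/2 + e * sgn (S t)" for t by (simp add: p_def S_def forecast_def)
  have fA0: "finite A0" by (simp add: A0_def)
  have A0sub: "A0 \<subseteq> {1..T}" by (auto simp: A0_def)
  have xv: "\<forall>t\<in>A0. x t = 0 \<or> x t = 1" using bits_val[OF x] A0sub by blast
  obtain A' where A': "A' \<subseteq> A0" "\<bar>\<Sum>t\<in>A'. x t - a\<bar> \<le> 1" "real (card (A0 - A')) \<le> 4 * \<bar>E0\<bar>"
    using move[OF fA0 xv, of a] e0 e1 by (auto simp: a_def E0_def)
  define R where "R = A0 - A'"
  have fR: "finite R" using fA0 by (simp add: R_def)
  have B: "{1..T} - A' = B0 \<union> R" "B0 \<inter> R = {}" using A' A0sub by (auto simp: B0_def R_def)
  have fB0: "finite B0" by (simp add: B0_def)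
  have cb: "CalDist T x p \<le> (\<Sum>t\<in>A'. \<bar>p t - a\<bar>) + (\<Sum>t\<in>{1..T}-A'. \<bar>p t - b\<bar>)
      + \<bar>\<Sum>t\<in>A'. x t - a\<bar> + \<bar>\<Sum>t\<in>{1..T}-A'. x t - b\<bar>"
    by (rule cal_bound[OF x]) (use A' A0sub in auto)
  have pa: "t \<in> A0 \<Longrightarrow> \<bar>p t - a\<bar> = e * (if S t = 0 then 1 else 0)" for t
    using e0 by (auto simp: A0_def pS a_def)
  have T1: "(\<Sum>t\<in>A'. \<bar>p t - a\<bar>) \<le> e * Z1"
  proof -
    have "(\<Sum>t\<in>A'. \<bar>p t - a\<bar>) \<le> (\<Sum>t\<in>A0. \<bar>p t - a\<bar>)"
      using A' fA0 by (intro sum_mono2) auto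
    also have "\<dots> = (\<Sum>t\<in>A0. e * (if S t = 0 then 1 else 0))" using pa by simp
    also have "\<dots> \<le> (\<Sum>t\<in>{1..T}. e * (if S t = 0 then 1 else 0))"
      using A0sub e0 by (intro sum_mono2) auto
    finally show ?thesis by (simp add: Z1_def sum_distrib_left)
  qed
  have pb0: "t \<in> B0 \<Longrightarrow> p t = b" for t by (auto simp: B0_def A0_def pS b_def)
  have pbR: "t \<in> R \<Longrightarrow> \<bar>p t - b\<bar> \<le> 2 * e" for t
    using e0 by (auto simp: R_def A0_def pS b_def sgn_if)
  have T2: "(\<Sum>t\<in>{1..T}-A'. \<bar>p t - b\<bar>) \<le> 2 * e * card R"
  proof -
    have "(\<Sum>t\<in>{1..T}-A'. \<bar>p t - b\<bar>) = (\<Sum>t\<in>B0. \<bar>p t - b\<bar>) + (\<Sum>t\<in>R. \<bar>p t - b\<bar>)"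
      unfolding B(1) using B(2) fB0 fR by (simp add: sum.union_disjoint)
    also have "(\<Sum>t\<in>B0. \<bar>p t - b\<bar>) = 0" using pb0 by simp
    also have "(\<Sum>t\<in>R. \<bar>p t - b\<bar>) \<le> (\<Sum>t\<in>R. 2 * e)" using pbR by (intro sum_mono) auto
    finally show ?thesis by (simp add: mult.commute)
  qed
  have Ssum: "S_run e x T = (\<Sum>t\<in>{1..T}. x t - p t)" by (simp add: S_run_sum p_def)
  have split0: "(\<Sum>t\<in>{1..T}. f t) = (\<Sum>t\<in>A0. f t) + (\<Sum>t\<in>B0. f t)" for f :: "nat \<Rightarrow> real"
  proof -
    have "{1..T} = A0 \<union> B0" "A0 \<inter> B0 = {}" using A0sub by (auto simp: B0_def)
    then show ?thesis using fA0 fB0 by (simp add: sum.union_disjoint)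
  qed
  have key: "(\<Sum>t\<in>B0. x t - b) + E0 = S_run e x T - e * Z1"
  proof -
    have "(\<Sum>t\<in>B0. x t - b) = (\<Sum>t\<in>B0. x t - p t)" using pb0 by simp
    moreover have "E0 = (\<Sum>t\<in>A0. (x t - p t) - e * (if S t = 0 then 1 else 0))"
      unfolding E0_def by (rule sum.cong) (auto simp: A0_def pS a_def)
    moreover have "(\<Sum>t\<in>A0. (if S t = 0 then 1 else (0::real))) = Z1"
    proof -
      have "(\<Sum>t\<in>{1..T}. (if S t = 0 then 1 else (0::real))) = (\<Sum>t\<in>A0. (if S t = 0 then 1 else (0::real))) + (\<Sum>t\<in>B0. (if S t = 0 then 1 else (0::real)))"
        by (rule split0)
      moreover have "(\<Sum>t\<in>B0. (if S t = 0 then 1 else (0::real))) = 0"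
        by (rule sum.neutral) (auto simp: B0_def A0_def)
      ultimately show ?thesis by (simp add: Z1_def)
    qed
    ultimately show ?thesis using split0[of "\<lambda>t. x t - p t"] Ssum
      by (simp add: sum_subtractf sum_distrib_left[symmetric])
  qed
  have T4: "\<bar>\<Sum>t\<in>{1..T}-A'. x t - b\<bar> \<le> \<bar>S_run e x T\<bar> + e * Z1 + 1 + 2 * e * card R"
  proof -
    have "(\<Sum>t\<in>{1..T}-A'. x t - b) = (\<Sum>t\<in>B0. x t - b) + (\<Sum>t\<in>R. x t - b)"
      unfolding B(1) using B(2) fB0 fR by (simp add: sum.union_disjoint)
    also have "(\<Sum>t\<in>R. x t - b) = (\<Sum>t\<in>R. x t - a) + 2 * e * card R"
      by (simp add: sum_subtractf sum.distrib a_def b_def algebra_simps)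
    also have "(\<Sum>t\<in>R. x t - a) = E0 - (\<Sum>t\<in>A'. x t - a)"
      unfolding R_def E0_def using A'(1) fA0 by (simp add: sum_diff finite_subset)
    finally have "(\<Sum>t\<in>{1..T}-A'. x t - b) = (S_run e x T - e * Z1) - (\<Sum>t\<in>A'. x t - a) + 2 * e * card R"
      using key by simp
    moreover have "0 \<le> e * Z1" unfolding Z1_def using e0 by (intro mult_nonneg_nonneg sum_nonneg) auto
    moreover have "0 \<le> 2 * e * card R" using e0 by simp
    ultimately show ?thesis using A'(2) by linarith
  qed
  have E0b: "\<bar>E0\<bar> \<le> \<bar>Mk e x T\<bar> + e * T"
  proof -
    have "E0 = (\<Sum>t\<in>A0. x t - 1/2) - e * card A0" by (simp add: E0_def a_def sum_subtractf algebra_simps)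
    moreover have "(\<Sum>t\<in>A0. x t - 1/2) = Mk e x T"
    proof -
      have "(\<Sum>t\<in>{1..T}. if S t \<ge> 0 then x t - 1/2 else 0) = (\<Sum>t\<in>A0. x t - 1/2)"
        unfolding A0_def by (simp add: sum.inter_filter[symmetric])
      moreover have "(\<Sum>t\<in>{1..T}. if S t \<ge> 0 then x t - 1/2 else 0) = Mk e x T"
        unfolding Mk_def S_def using shift1[of "\<lambda>i. if S_run e x i \<ge> 0 then x (Suc i) - 1/2 else 0" T]
        by (simp add: sum.atLeast1_atMost_eq)
      ultimately show ?thesis by simp
    qed
    moreover have "e * card A0 \<le> e * T" using card_mono[OF _ A0sub] e0 by (intro mult_left_mono) auto
    moreover have "0 \<le> e * card A0" using e0 by simp
    ultimately show ?thesis by linarith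
  qed
  have Z1i: "Z1 = (\<Sum>i<T. if S_run e x i = 0 then 1 else 0)"
    unfolding Z1_def S_def by (rule shift1)
  have "CalDist T x p \<le> 2 + \<bar>S_run e x T\<bar> + 2 * e * Z1 + 4 * e * card R"
    using cb T1 T2 T4 A'(2) unfolding p_def by linarith
  also have "4 * e * card R \<le> 16 * e * \<bar>Mk e x T\<bar> + 16 * e^2 * T"
  proof -
    have "4 * e * card R \<le> 4 * e * (4 * (\<bar>Mk e x T\<bar> + e * T))"
      using A'(3) E0b e0 unfolding R_def by (intro mult_left_mono) auto
    then show ?thesis by (simp add: algebra_simps power2_eq_square)
  qed
  finally show ?thesis unfolding Z1i p_def by simp
qed



lemma crude:
  assumes x: "x \<in> bits T" and e0: "0 < e" and e1: "e \<le> 1"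
  shows "CalDist T x (forecast e x) \<le> 3/2 * T"
proof -
  have xin: "x \<in> calib_set T x"
    using x unfolding calib_set_def bits_def by (auto simp: PiE_def Pi_def)
  have "CalDist T x (forecast e x) \<le> (\<Sum>t\<in>{1..T}. \<bar>forecast e x t - x t\<bar>)"
    unfolding CalDist_def
    by (rule cINF_lower[OF _ xin]) (auto intro: bdd_belowI[of _ 0] simp: sum_nonneg)
  also have "\<dots> \<le> (\<Sum>t\<in>{1..T}. 3/2)"
  proof (rule sum_mono)
    fix t assume t: "t \<in> {1..T}"
    have "x t = 0 \<or> x t = 1" using bits_val[OF x t] .
    moreover have "\<bar>e * sgn (S_run e x (t - 1))\<bar> \<le> 1"
      using e0 e1 by (auto simp: abs_mult sgn_if)
    then have u: "- 1 \<le> e * sgn (S_run e x (t - 1)) \<and> e * sgn (S_run e x (t - 1)) \<le> 1"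
      by (simp add: abs_le_iff)
    have "forecast e x t - x t = 1/2 + e * sgn (S_run e x (t - 1)) - x t" by (simp add: forecast_def)
    then show "\<bar>forecast e x t - x t\<bar> \<le> 3/2"
      using u \<open>x t = 0 \<or> x t = 1\<close> unfolding abs_le_iff by linarith
  qed
  finally show ?thesis by simp
qed

theorem corollary1:
  shows "\<exists>C::real. \<forall>T::nat. T \<ge> 1 \<longrightarrow>
    (\<Sum>x\<in>bits T. CalDist T x (forecast (real T powr (-1/3)) x)) / 2 ^ T
      \<le> C * real T powr (1/3)"
proof (intro exI[of _ 400] allI impI)
  fix T :: nat assume T1: "T \<ge> 1"
  define c where "c = real T powr (1/3)"
  define e where "e = real T powr (-1/3)"
  define N where "N = (2::real)^T"
  have Tpos: "real T > 0" using T1 by simp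
  have c0: "c > 0" using Tpos by (simp add: c_def)
  have ec: "e = 1 / c"
  proof -
    have "real T powr (-1/3) = real T powr (-(1/3))" by simp
    also have "\<dots> = inverse (real T powr (1/3))" by (rule powr_minus)
    also have "\<dots> = 1 / real T powr (1/3)" by (rule inverse_eq_divide)
    finally show ?thesis unfolding e_def c_def .
  qed
  have e0: "e > 0" using c0 ec by simp
  have c3: "c^3 = real T"
  proof -
    have "c^3 = c powr (real 3)" using c0 by (simp add: powr_realpow)
    also have "\<dots> = real T" using Tpos by (simp add: c_def powr_powr)
    finally show ?thesis .
  qed
  have c1: "c \<ge> 1" using T1 by (simp add: c_def ge_one_powr_ge_zero)
  have N0: "N > 0" by (simp add: N_def)
  have cN: "real (card (bits T)) = N" by (simp add: card_bits N_def)
  have sumN: "(\<Sum>x\<in>bits T. (k::real)) = k * N" for k by (simp add: cN)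
  have goal: "(\<Sum>x\<in>bits T. CalDist T x (forecast e x)) / N \<le> 400 * c"
  proof (cases "T < 64")
    case True
    have c4: "c < 4"
    proof (rule ccontr)
      assume "\<not> c < 4"
      then have "4^3 \<le> c^3" by (intro power_mono) auto
      then show False using c3 True by simp
    qed
    have e1: "e \<le> 1" using ec c1 by simp
    have "(\<Sum>x\<in>bits T. CalDist T x (forecast e x)) \<le> (\<Sum>x\<in>bits T. 3/2 * T)"
      by (rule sum_mono) (rule crude[OF _ e0 e1])
    also have "\<dots> = 3/2 * T * N" by (rule sumN)
    also have "\<dots> \<le> 400 * c * N"
    proof -
      have "real T = c * c^2" using c3 by (simp add: power3_eq_cube power2_eq_square)
      also have "\<dots> \<le> c * 16" using c0 c4 power_mono[of c 4 2] by (intro mult_left_mono) auto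
      finally have "3/2 * T \<le> 400 * c" using c0 by simp
      then show ?thesis using N0 by (intro mult_right_mono) auto
    qed
    finally show ?thesis using N0 by (simp add: pos_divide_le_eq)
  next
    case False
    have c4: "c \<ge> 4"
    proof (rule ccontr)
      assume "\<not> c \<ge> 4"
      then have "c^3 < 4^3" using c0 by (intro power_strict_mono) auto
      then show False using c3 False by simp
    qed
    have e14: "e \<le> 1/4" unfolding ec using c4 c0 by (simp add: divide_le_eq)
    have e2T: "e^2 * T = c"
    proof -
      have "e^2 * T = (1/c) * (1/c) * (c * c * c)" unfolding ec c3[symmetric] by (simp add: power2_eq_square power3_eq_cube)
      also have "\<dots> = c" using c0 by simp
      finally show ?thesis .
    qed
    have eT: "e * T = c^2"
    proof -
      have "e * T = (1/c) * (c * c * c)" unfolding ec c3[symmetric] by (simp add: power3_eq_cube)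
      also have "\<dots> = c^2" using c0 by (simp add: power2_eq_square)
      finally show ?thesis .
    qed
    define Z where "Z x = (\<Sum>i<T. if S_run e x i = 0 then 1 else (0::real))" for x
    have "(\<Sum>x\<in>bits T. CalDist T x (forecast e x)) \<le>
      (\<Sum>x\<in>bits T. 2 + \<bar>S_run e x T\<bar> + 2 * e * Z x + 16 * e * \<bar>Mk e x T\<bar> + 16 * e^2 * T)"
      unfolding Z_def by (rule sum_mono) (rule det[OF _ e0 e14])
    also have "\<dots> = 2 * N + (\<Sum>x\<in>bits T. \<bar>S_run e x T\<bar>) + 2 * e * (\<Sum>x\<in>bits T. Z x)
         + 16 * e * (\<Sum>x\<in>bits T. \<bar>Mk e x T\<bar>) + 16 * e^2 * T * N"
      by (simp add: sum.distrib sum_distrib_left card_bits N_def algebra_simps)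
    also have "\<dots> \<le> 352 * c * N"
    proof -
      have S1: "(\<Sum>x\<in>bits T. \<bar>S_run e x T\<bar>) \<le> 64 * c * N"
      proof -
        have "(\<Sum>x\<in>bits T. \<bar>S_run e x T\<bar>) \<le> (\<Sum>x\<in>bits T. 2 * c * ch (e * S_run e x T))"
        proof (rule sum_mono)
          fix x
          have "\<bar>e * S_run e x T\<bar> \<le> 2 * ch (e * S_run e x T)" by (rule abs_le_ch)
          then have "e * \<bar>S_run e x T\<bar> \<le> 2 * ch (e * S_run e x T)" using e0 by (simp add: abs_mult)
          then have "c * (e * \<bar>S_run e x T\<bar>) \<le> c * (2 * ch (e * S_run e x T))" using c0 by simp
          then show "\<bar>S_run e x T\<bar> \<le> 2 * c * ch (e * S_run e x T)" using ec c0 by simp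
        qed
        also have "\<dots> = 2 * c * (\<Sum>x\<in>bits T. ch (e * S_run e x T))" by (simp add: sum_distrib_left)
        also have "\<dots> \<le> 2 * c * (32 * N)"
          using ch_sum_bound[OF e0 e14 order_refl] c0 by (simp add: N_def)
        finally show ?thesis by simp
      qed
      have Z1: "(\<Sum>x\<in>bits T. Z x) \<le> 2 * (64 * c * N + c^2 * N)"
        using abs_sum_bound[of e T T] e0 S1 eT unfolding Z_def N_def by simp
      have M1: "16 * e * (\<Sum>x\<in>bits T. \<bar>Mk e x T\<bar>) \<le> 8 * (c / 4 * N + N)"
      proof -
        have "16 * e * (\<Sum>x\<in>bits T. \<bar>Mk e x T\<bar>) = (\<Sum>x\<in>bits T. 16 * (e * \<bar>Mk e x T\<bar>))"
          by (simp add: sum_distrib_left mult.assoc)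
        also have "\<dots> \<le> (\<Sum>x\<in>bits T. 8 * (e^2 * (Mk e x T)^2 + 1))"
        proof (rule sum_mono)
          fix x
          have "0 \<le> (e * \<bar>Mk e x T\<bar> - 1)^2" by simp
          then have "2 * (e * \<bar>Mk e x T\<bar>) \<le> e^2 * (Mk e x T)^2 + 1"
            by (simp add: power2_eq_square algebra_simps)
          then show "16 * (e * \<bar>Mk e x T\<bar>) \<le> 8 * (e^2 * (Mk e x T)^2 + 1)" by simp
        qed
        also have "\<dots> = 8 * (e^2 * (\<Sum>x\<in>bits T. (Mk e x T)^2) + N)"
          by (simp add: sum.distrib sum_distrib_left cN)
        also have "\<dots> \<le> 8 * (e^2 * (T / 4 * N) + N)"
          using Mk_sq_bound[of T T e] by (intro mult_left_mono add_right_mono mult_left_mono) (auto simp: N_def)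
        also have "e^2 * (T / 4 * N) = (e^2 * T) / 4 * N" by simp
        also have "\<dots> = c / 4 * N" unfolding e2T ..
        finally show ?thesis .
      qed
      have "2 * e * (\<Sum>x\<in>bits T. Z x) \<le> 2 * e * (2 * (64 * c * N + c^2 * N))"
        using Z1 e0 by (intro mult_left_mono) auto
      also have "\<dots> = 256 * (e * c) * N + 4 * (e * c) * c * N" by (simp add: algebra_simps power2_eq_square)
      also have "e * c = 1" using ec c0 by simp
      also have "256 * 1 * N + 4 * 1 * c * N = 256 * N + 4 * c * N" by simp
      finally have Z2: "2 * e * (\<Sum>x\<in>bits T. Z x) \<le> 256 * N + 4 * c * N" .
      have "16 * e^2 * T * N = 16 * c * N" using e2T by simp
      moreover have "N \<le> c * N" using c1 N0 by simp
      moreover have "8 * (c / 4 * N + N) = 2 * (c * N) + 8 * N" by (simp add: algebra_simps)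
      moreover have "(64::real) * c * N = 64 * (c * N)" "(4::real) * c * N = 4 * (c * N)"
        "(16::real) * c * N = 16 * (c * N)" "(352::real) * c * N = 352 * (c * N)" by simp_all
      ultimately show ?thesis using S1 Z2 M1 by linarith
    qed
    also have "\<dots> \<le> 400 * c * N" using c0 N0 by simp
    finally show ?thesis using N0 by (simp add: pos_divide_le_eq)
  qed
  then show "(\<Sum>x\<in>bits T. CalDist T x (forecast (real T powr (-1/3)) x)) / 2 ^ T \<le> 400 * real T powr (1/3)"
    unfolding e_def c_def N_def by simp
qed


end
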